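(* A class $\mathcal{C}$ of graphs has tree rank at most $2$ if and only if it has locally almost bounded degree.
   Context: $T_{d,m}$ is the rooted tree of depth $d$ (all leaf-to-root paths have $d$ edges) in which every non-leaf vertex has exactly $m$ children. $H$ is an $r$-shallow topological minor of $G$ if $G$ has a subgraph isomorphic to a graph obtained from $H$ by replacing each edge by a path with at most $r$ internal vertices (paths internally disjoint). A class has tree rank at most $d$ if for every $r\in\mathbb{N}$ there is $m\in\mathbb{N}$ such that no graph of the class contains $T_{d,m}$ as an $r$-shallow topological minor. $N_r^G(v)$ is the closed $r$-neighborhood of $v$ (vertices at distance at most $r$ from $v$, including $v$). A class $\mathcal{C}$ has locally almost bounded degree if there exist functions $f,d:\mathbb{N}\to\mathbb{N}$ such that for every $r\in\mathbb{N}$, every $G\in\mathcal{C}$ and every $v\in V(G)$, the set $N_r^G(v)$ contains at most $f(r)$ vertices whose degree in $G$ is larger than $d(r)$. *)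

theory Defs
  imports Main
begin

type_synonym 'a graph = "'a set \<times> 'a set set"

definition verts :: "'a graph \<Rightarrow> 'a set" where "verts G = fst G"
definition edges :: "'a graph \<Rightarrow> 'a set set" where "edges G = snd G"

definition graph :: "'a graph \<Rightarrow> bool" where
  "graph G \<longleftrightarrow> finite (verts G) \<and> (\<forall>e\<in>edges G. e \<subseteq> verts G \<and> card e = 2)"

definition adj :: "'a graph \<Rightarrow> 'a \<Rightarrow> 'a \<Rightarrow> bool" where
  "adj G u v \<longleftrightarrow> {u, v} \<in> edges G"

definition degree :: "'a graph \<Rightarrow> 'a \<Rightarrow> nat" where
  "degree G v = card {e \<in> edges G. v \<in> e}"

definition walk :: "'a graph \<Rightarrow> 'a list \<Rightarrow> bool" where
  "walk G ws \<longleftrightarrow> ws \<noteq> [] \<and> set ws \<subseteq> verts G \<and>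
     (\<forall>i. Suc i < length ws \<longrightarrow> adj G (ws ! i) (ws ! Suc i))"

text \<open>Closed r-neighbourhood: vertices at distance at most r (including v).\<close>
definition nbhd :: "nat \<Rightarrow> 'a graph \<Rightarrow> 'a \<Rightarrow> 'a set" where
  "nbhd r G v = {u. \<exists>ws. walk G ws \<and> hd ws = v \<and> last ws = u \<and> length ws \<le> r + 1}"

definition gpath :: "'a graph \<Rightarrow> 'a list \<Rightarrow> bool" where
  "gpath G ps \<longleftrightarrow> walk G ps \<and> distinct ps"

definition internal :: "'a list \<Rightarrow> 'a set" where
  "internal ps = set (butlast (tl ps))"

text \<open>H is an r-shallow topological minor of G: a subdivision of H, in which every edge
is replaced by a path with at most r internal vertices (paths internally disjoint,
internal vertices distinct from branch vertices), is a subgraph of G.\<close>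
definition shallow_top_minor :: "nat \<Rightarrow> 'b graph \<Rightarrow> 'a graph \<Rightarrow> bool" where
  "shallow_top_minor r H G \<longleftrightarrow>
     (\<exists>(f :: 'b \<Rightarrow> 'a) (P :: 'b set \<Rightarrow> 'a list).
        inj_on f (verts H) \<and> f ` verts H \<subseteq> verts G \<and>
        (\<forall>e\<in>edges H. gpath G (P e) \<and> length (P e) \<ge> 2 \<and> length (P e) \<le> r + 2 \<and>
                      {hd (P e), last (P e)} = f ` e \<and>
                      internal (P e) \<inter> f ` verts H = {}) \<and>
        (\<forall>e\<in>edges H. \<forall>e'\<in>edges H. e \<noteq> e' \<longrightarrow> internal (P e) \<inter> internal (P e') = {}))"

text \<open>The tree T_{d,m}: vertices are sequences over {0..<m} of length at most d
(root = []), each non-leaf xs has the m children xs @ [i].\<close>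
definition T :: "nat \<Rightarrow> nat \<Rightarrow> nat list graph" where
  "T d m = ({xs. length xs \<le> d \<and> set xs \<subseteq> {..<m}},
            {{xs, xs @ [i]} | xs i. length xs < d \<and> set xs \<subseteq> {..<m} \<and> i < m})"

definition tree_rank_le :: "nat \<Rightarrow> 'a graph set \<Rightarrow> bool" where
  "tree_rank_le d C \<longleftrightarrow> (\<forall>r. \<exists>m. \<forall>G\<in>C. \<not> shallow_top_minor r (T d m) G)"

definition locally_almost_bounded_degree :: "'a graph set \<Rightarrow> bool" where
  "locally_almost_bounded_degree C \<longleftrightarrow>
     (\<exists>f d :: nat \<Rightarrow> nat. \<forall>r. \<forall>G\<in>C. \<forall>v\<in>verts G.
        card {u \<in> nbhd r G v. degree G u > d r} \<le> f r)"

end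

theory Submission
  imports Defs
begin


lemma graph_edges_finite: "graph G \<Longrightarrow> finite (edges G)"
proof -
  assume g: "graph G"
  hence "edges G \<subseteq> Pow (verts G)" unfolding graph_def by auto
  moreover have "finite (Pow (verts G))" using g unfolding graph_def by auto
  ultimately show ?thesis by (rule finite_subset)
qed

lemma adj_sym: "adj G u v = adj G v u"
  unfolding adj_def by (simp add: insert_commute)

lemma adj_verts: "graph G \<Longrightarrow> adj G u v \<Longrightarrow> u \<in> verts G \<and> v \<in> verts G \<and> u \<noteq> v"
proof -
  assume g: "graph G" and a: "adj G u v"
  hence "{u,v} \<subseteq> verts G" "card {u,v} = 2" unfolding graph_def adj_def by auto
  thus ?thesis by (cases "u = v") auto
qed

lemma walk_rev: "walk G ws \<Longrightarrow> walk G (rev ws)"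
  unfolding walk_def
proof (intro conjI allI impI)
  fix i assume w: "ws \<noteq> [] \<and> set ws \<subseteq> verts G \<and> (\<forall>i. Suc i < length ws \<longrightarrow> adj G (ws ! i) (ws ! Suc i))"
    and i: "Suc i < length (rev ws)"
  define k where "k = length ws - Suc (Suc i)"
  have k1: "Suc k < length ws" using i unfolding k_def by simp
  have e1: "rev ws ! i = ws ! Suc k" using i unfolding k_def by (simp add: rev_nth Suc_diff_Suc)
  have e2: "rev ws ! Suc i = ws ! k" using i unfolding k_def by (simp add: rev_nth)
  show "adj G (rev ws ! i) (rev ws ! Suc i)" using w k1 e1 e2 adj_sym by metis
qed auto

lemma nbhd_verts: "nbhd r G v \<subseteq> verts G"
  unfolding nbhd_def walk_def by auto

lemma nbhd_finite: "graph G \<Longrightarrow> finite (nbhd r G v)"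
  using nbhd_verts unfolding graph_def by (metis finite_subset)

lemma internal_distinct:
  assumes "distinct xs" "2 \<le> length xs"
  shows "internal xs = set xs - {hd xs, last xs}"
proof -
  obtain a t where xt: "xs = a # t" using assms by (cases xs) auto
  have "t \<noteq> []" using assms xt by auto
  then obtain ys b where t: "t = ys @ [b]" by (metis append_butlast_last_id)
  show ?thesis using assms unfolding xt t internal_def by auto
qed

lemma path_vertex_cases:
  assumes "distinct xs" "2 \<le> length xs" "x \<in> set xs"
  shows "x = hd xs \<or> x = last xs \<or> x \<in> internal xs"
  using internal_distinct[OF assms(1,2)] assms(3) by auto



lemma len_le2_cases: "length xs \<le> 2 \<Longrightarrow> xs = [] \<or> (\<exists>a. xs = [a]) \<or> (\<exists>a b. xs = [a,b])"
proof (cases xs)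
  case (Cons a t)
  assume l: "length xs \<le> 2"
  show ?thesis
  proof (cases t)
    case (Cons b t')
    then have "t' = []" using l \<open>xs = a # t\<close> by simp
    then show ?thesis using Cons \<open>xs = a # t\<close> by simp
  qed (simp add: Cons)
qed simp

lemma T2_verts: "xs \<in> verts (T 2 m) \<longleftrightarrow> xs = [] \<or> (\<exists>i<m. xs = [i]) \<or> (\<exists>i<m. \<exists>j<m. xs = [i,j])"
proof
  assume "xs \<in> verts (T 2 m)"
  hence l: "length xs \<le> 2" and s: "set xs \<subseteq> {..<m}" by (simp_all add: T_def verts_def)
  from len_le2_cases[OF l] show "xs = [] \<or> (\<exists>i<m. xs = [i]) \<or> (\<exists>i<m. \<exists>j<m. xs = [i,j])"
  proof (elim disjE exE)
    fix a assume "xs = [a]" thus ?thesis using s by simp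
  next
    fix a b assume "xs = [a,b]" thus ?thesis using s by simp
  qed simp
next
  assume "xs = [] \<or> (\<exists>i<m. xs = [i]) \<or> (\<exists>i<m. \<exists>j<m. xs = [i,j])"
  thus "xs \<in> verts (T 2 m)" by (elim disjE exE conjE) (simp_all add: T_def verts_def)
qed

lemma T2_edges: "e \<in> edges (T 2 m) \<longleftrightarrow> (\<exists>i<m. e = {[],[i]}) \<or> (\<exists>i<m. \<exists>j<m. e = {[i],[i,j]})"
proof
  assume "e \<in> edges (T 2 m)"
  then obtain xs i where e: "e = {xs, xs @ [i]}" "length xs < 2" "set xs \<subseteq> {..<m}" "i < m"
    unfolding T_def edges_def by auto
  have "xs = [] \<or> (\<exists>a. xs = [a])" using e(2) len_le2_cases[of xs] by auto
  thus "(\<exists>i<m. e = {[],[i]}) \<or> (\<exists>i<m. \<exists>j<m. e = {[i],[i,j]})"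
  proof (elim disjE exE)
    assume "xs = []" hence "e = {[],[i]}" using e by simp
    thus ?thesis using e(4) by blast
  next
    fix a assume a: "xs = [a]" hence "e = {[a],[a,i]}" "a < m" using e by auto
    thus ?thesis using e(4) by blast
  qed
next
  assume "(\<exists>i<m. e = {[],[i]}) \<or> (\<exists>i<m. \<exists>j<m. e = {[i],[i,j]})"
  thus "e \<in> edges (T 2 m)"
  proof
    assume "\<exists>i<m. e = {[],[i]}"
    then obtain i where i: "i < m" "e = {[], [] @ [i]}" by auto
    show ?thesis unfolding T_def edges_def snd_conv mem_Collect_eq
      by (rule exI[of _ "[]"], rule exI[of _ i]) (simp add: i)
  next
    assume "\<exists>i<m. \<exists>j<m. e = {[i],[i,j]}"
    then obtain i j where i: "i < m" "j < m" "e = {[i], [i] @ [j]}" by auto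
    show ?thesis unfolding T_def edges_def snd_conv mem_Collect_eq
      by (rule exI[of _ "[i]"], rule exI[of _ j]) (simp add: i)
  qed
qed

lemma T2_v0: "[] \<in> verts (T 2 m)" by (simp add: T2_verts)
lemma T2_v1: "i < m \<Longrightarrow> [i] \<in> verts (T 2 m)" by (simp add: T2_verts)
lemma T2_v2: "i < m \<Longrightarrow> j < m \<Longrightarrow> [i,j] \<in> verts (T 2 m)" by (simp add: T2_verts)
lemma T2_e1: "i < m \<Longrightarrow> {[],[i]} \<in> edges (T 2 m)" using T2_edges by blast
lemma T2_e2: "i < m \<Longrightarrow> j < m \<Longrightarrow> {[i],[i,j]} \<in> edges (T 2 m)" using T2_edges by blast

lemma stm_big_nbhd:
  assumes g: "graph G" and st: "shallow_top_minor r (T 2 m) G"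
  shows "\<exists>v\<in>verts G. m \<le> card {u \<in> nbhd (Suc r) G v. m \<le> degree G u}"
proof -
  obtain fm :: "nat list \<Rightarrow> 'a" and P where
    inj: "inj_on fm (verts (T 2 m))" and fv: "fm ` verts (T 2 m) \<subseteq> verts G" and
    pe': "\<forall>e\<in>edges (T 2 m). gpath G (P e) \<and> length (P e) \<ge> 2 \<and> length (P e) \<le> r + 2 \<and>
                      {hd (P e), last (P e)} = fm ` e \<and>
                      internal (P e) \<inter> fm ` verts (T 2 m) = {}" and
    dj': "\<forall>e\<in>edges (T 2 m). \<forall>e'\<in>edges (T 2 m). e \<noteq> e' \<longrightarrow> internal (P e) \<inter> internal (P e') = {}"
    using st unfolding shallow_top_minor_def by (elim exE conjE) (rule that; assumption)
  have pe: "\<And>e. e\<in>edges (T 2 m) \<Longrightarrow> gpath G (P e) \<and> length (P e) \<ge> 2 \<and> length (P e) \<le> r + 2 \<and>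
                      {hd (P e), last (P e)} = fm ` e \<and>
                      internal (P e) \<inter> fm ` verts (T 2 m) = {}" using pe' by (rule bspec)
  have dj: "\<And>e e'. e\<in>edges (T 2 m) \<Longrightarrow> e'\<in>edges (T 2 m) \<Longrightarrow> e \<noteq> e' \<Longrightarrow> internal (P e) \<inter> internal (P e') = {}"
    using dj' by blast
  define v where "v = fm []"
  define u where "u i = fm [i]" for i
  have vV: "v \<in> verts G" using fv T2_v0 unfolding v_def by blast
  have uinj: "inj_on u {..<m}"
  proof (rule inj_onI)
    fix i j assume "i \<in> {..<m}" "j \<in> {..<m}" "u i = u j"
    hence "[i] = [j]" using inj T2_v1 \<open>i \<in> {..<m}\<close> \<open>j \<in> {..<m}\<close> unfolding u_def inj_on_def by blast
    thus "i = j" by simp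
  qed
  have nb: "u i \<in> nbhd (Suc r) G v" if i: "i < m" for i
  proof -
    define p where "p = P {[],[i]}"
    have "{[],[i]} \<in> edges (T 2 m)" using T2_e1 i by blast
    note pe[OF this]
    hence pp: "gpath G p" "length p \<le> r + 2" "{hd p, last p} = {v, u i}"
      unfolding p_def v_def u_def by simp_all
    hence w: "walk G p" unfolding gpath_def by auto
    from pp(3) have "(hd p = v \<and> last p = u i) \<or> (hd p = u i \<and> last p = v)"
      by (auto simp: doubleton_eq_iff)
    thus ?thesis
    proof
      assume "hd p = v \<and> last p = u i"
      thus ?thesis using w pp unfolding nbhd_def by auto
    next
      assume h: "hd p = u i \<and> last p = v"
      have "p \<noteq> []" using w unfolding walk_def by auto
      hence "hd (rev p) = v" "last (rev p) = u i" using h by (auto simp: hd_rev last_rev)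
      thus ?thesis using walk_rev[OF w] pp unfolding nbhd_def by (intro CollectI exI[of _ "rev p"]) auto
    qed
  qed
  have deg: "m \<le> degree G (u i)" if i: "i < m" for i
  proof -
    define p where "p j = P {[i],[i,j]}" for j
    define nb where "nb j = (if hd (p j) = u i then p j ! 1 else p j ! (length (p j) - 2))" for j
    have nbp: "{u i, nb j} \<in> edges G \<and> (nb j = fm [i,j] \<or> nb j \<in> internal (p j))" if j: "j < m" for j
    proof -
      have ee: "{[i],[i,j]} \<in> edges (T 2 m)" using T2_e2 i j by blast
      note pe[OF ee]
      hence pp: "gpath G (p j)" "length (p j) \<ge> 2" "{hd (p j), last (p j)} = {u i, fm [i,j]}"
        "internal (p j) \<inter> fm ` verts (T 2 m) = {}"
        unfolding p_def u_def by simp_all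
      have w: "walk G (p j)" and ds: "distinct (p j)" using pp unfolding gpath_def by auto
      have ne: "p j \<noteq> []" using pp by auto
      have A: "{u i, nb j} \<in> edges G \<and> nb j \<in> set (p j) \<and> nb j \<noteq> u i"
      proof (cases "hd (p j) = u i")
        case True
        hence n1: "nb j = p j ! 1" unfolding nb_def by simp
        have "adj G (p j ! 0) (p j ! Suc 0)" using w pp(2) unfolding walk_def by auto
        moreover have "p j ! 0 = u i" using True ne by (simp add: hd_conv_nth)
        moreover have "p j ! 1 \<noteq> p j ! 0" using ds pp(2) ne nth_eq_iff_index_eq[of "p j" 1 0] by simp
        moreover have "p j ! 1 \<in> set (p j)" using pp(2) by simp
        ultimately show ?thesis using n1 unfolding adj_def by auto
      next
        case False
        hence lu: "last (p j) = u i" using pp(3) by (auto simp: doubleton_eq_iff)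
        have n1: "nb j = p j ! (length (p j) - 2)" unfolding nb_def using False by simp
        define k where "k = length (p j) - 2"
        have k: "Suc k < length (p j)" "Suc k = length (p j) - 1" using pp(2) unfolding k_def by auto
        have "adj G (p j ! k) (p j ! Suc k)" using w k(1) unfolding walk_def by blast
        moreover have "p j ! Suc k = u i" using lu ne k(2) last_conv_nth[of "p j"] by simp
        moreover have "p j ! k \<noteq> p j ! Suc k" using ds k by (simp add: nth_eq_iff_index_eq)
        moreover have "p j ! k \<in> set (p j)" using k by simp
        ultimately show ?thesis using n1 unfolding adj_def k_def by (auto simp: insert_commute)
      qed
      have "nb j = hd (p j) \<or> nb j = last (p j) \<or> nb j \<in> internal (p j)"
        using path_vertex_cases[OF ds pp(2)] A by blast
      hence "nb j = fm [i,j] \<or> nb j \<in> internal (p j)" using A pp(3) by (auto simp: doubleton_eq_iff)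
      thus ?thesis using A by blast
    qed
    have nbinj: "inj_on nb {..<m}"
    proof (rule inj_onI)
      fix j j' assume j: "j \<in> {..<m}" and j': "j' \<in> {..<m}" and eq: "nb j = nb j'"
      show "j = j'"
      proof (rule ccontr)
        assume ne: "j \<noteq> j'"
        have e1: "{[i],[i,j]} \<in> edges (T 2 m)" "{[i],[i,j']} \<in> edges (T 2 m)" using T2_e2 i j j' by auto
        have ee: "{[i],[i,j]} \<noteq> {[i],[i,j']}" using ne by (auto simp: doubleton_eq_iff)
        have vs: "[i,j] \<in> verts (T 2 m)" "[i,j'] \<in> verts (T 2 m)" using T2_v2 i j j' by auto
        have fne: "fm [i,j] \<noteq> fm [i,j']" using inj vs ne unfolding inj_on_def by blast
        have i1: "internal (p j) \<inter> fm ` verts (T 2 m) = {}" "internal (p j') \<inter> fm ` verts (T 2 m) = {}"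
          using pe[OF e1(1)] pe[OF e1(2)] unfolding p_def by simp_all
        have i2: "internal (p j) \<inter> internal (p j') = {}" using dj[OF e1 ee] unfolding p_def by auto
        have f1: "fm [i,j] \<in> fm ` verts (T 2 m)" "fm [i,j'] \<in> fm ` verts (T 2 m)" using vs by auto
        have n1: "nb j = fm [i,j] \<or> nb j \<in> internal (p j)" using nbp j by auto
        have n2: "nb j' = fm [i,j'] \<or> nb j' \<in> internal (p j')" using nbp j' by auto
        from n1 n2 show False
        proof (elim disjE)
          assume "nb j = fm [i,j]" "nb j' = fm [i,j']" thus False using eq fne by simp
        next
          assume a: "nb j = fm [i,j]" "nb j' \<in> internal (p j')"
          hence "fm [i,j] \<in> internal (p j') \<inter> fm ` verts (T 2 m)" using eq f1 by simp
          thus False using i1 by simp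
        next
          assume a: "nb j \<in> internal (p j)" "nb j' = fm [i,j']"
          hence "fm [i,j'] \<in> internal (p j) \<inter> fm ` verts (T 2 m)" using eq f1 by simp
          thus False using i1 by simp
        next
          assume a: "nb j \<in> internal (p j)" "nb j' \<in> internal (p j')"
          hence "nb j \<in> internal (p j) \<inter> internal (p j')" using eq by simp
          thus False using i2 by simp
        qed
      qed
    qed
    have sub: "(\<lambda>j. {u i, nb j}) ` {..<m} \<subseteq> {e \<in> edges G. u i \<in> e}" using nbp by auto
    have "inj_on (\<lambda>j. {u i, nb j}) {..<m}" using nbinj unfolding inj_on_def by (auto simp: doubleton_eq_iff)
    hence "card ((\<lambda>j. {u i, nb j}) ` {..<m}) = m" by (simp add: card_image)
    moreover have "finite {e \<in> edges G. u i \<in> e}" using graph_edges_finite[OF g] by auto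
    ultimately show ?thesis unfolding degree_def using card_mono[OF _ sub] by auto
  qed
  have "u ` {..<m} \<subseteq> {x \<in> nbhd (Suc r) G v. m \<le> degree G x}" using nb deg by auto
  hence "card (u ` {..<m}) \<le> card {x \<in> nbhd (Suc r) G v. m \<le> degree G x}"
    using nbhd_finite[OF g] by (intro card_mono) auto
  thus ?thesis using vV uinj by (auto simp: card_image)
qed

lemma labd_imp_tr:
  assumes g: "\<forall>G\<in>C. graph G" and l: "locally_almost_bounded_degree C"
  shows "tree_rank_le 2 C"
  unfolding tree_rank_le_def
proof
  fix r
  obtain f d :: "nat \<Rightarrow> nat" where fd: "\<And>r G v. G \<in> C \<Longrightarrow> v \<in> verts G \<Longrightarrow>
        card {u \<in> nbhd r G v. degree G u > d r} \<le> f r"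
    using l unfolding locally_almost_bounded_degree_def by blast
  define m where "m = f (Suc r) + d (Suc r) + 1"
  show "\<exists>m. \<forall>G\<in>C. \<not> shallow_top_minor r (T 2 m) G"
  proof (intro exI ballI notI)
    fix G assume G: "G \<in> C" and st: "shallow_top_minor r (T 2 m) G"
    obtain v where v: "v \<in> verts G" and c: "m \<le> card {u \<in> nbhd (Suc r) G v. m \<le> degree G u}"
      using stm_big_nbhd[OF _ st] g G by blast
    have "{u \<in> nbhd (Suc r) G v. m \<le> degree G u} \<subseteq> {u \<in> nbhd (Suc r) G v. degree G u > d (Suc r)}"
      unfolding m_def by auto
    hence "card {u \<in> nbhd (Suc r) G v. m \<le> degree G u} \<le> card {u \<in> nbhd (Suc r) G v. degree G u > d (Suc r)}"
      using nbhd_finite[of G "Suc r" v] g G by (intro card_mono) auto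
    thus False using fd[OF G v, of "Suc r"] c unfolding m_def by linarith
  qed
qed



lemma nbhd_mono: "n \<le> n' \<Longrightarrow> nbhd n G v \<subseteq> nbhd n' G v"
  unfolding nbhd_def by auto

lemma walk_single: "x \<in> verts G \<Longrightarrow> walk G [x]"
  unfolding walk_def by auto

lemma nbhd_0: "v \<in> verts G \<Longrightarrow> v \<in> nbhd 0 G v"
  unfolding nbhd_def using walk_single[of v G] by (intro CollectI exI[of _ "[v]"]) auto

lemma nbhd0_only: "u \<in> nbhd 0 G v \<Longrightarrow> u = v"
proof -
  assume "u \<in> nbhd 0 G v"
  then obtain ws where w: "walk G ws" "hd ws = v" "last ws = u" "length ws \<le> 1" unfolding nbhd_def by auto
  have "ws \<noteq> []" using w unfolding walk_def by auto
  then obtain x where "ws = [x]" using w(4) by (cases ws) auto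
  thus ?thesis using w by simp
qed

lemma nbhd_step:
  assumes "u \<in> nbhd (Suc n) G v"
  shows "u \<in> nbhd n G v \<or> (\<exists>p \<in> nbhd n G v. adj G p u)"
proof -
  obtain ws where w: "walk G ws" "hd ws = v" "last ws = u" "length ws \<le> Suc n + 1"
    using assms unfolding nbhd_def by auto
  show ?thesis
  proof (cases "length ws \<le> n + 1")
    case True thus ?thesis using w unfolding nbhd_def by auto
  next
    case False
    hence l: "length ws = n + 2" using w by simp
    define ws' where "ws' = take (Suc n) ws"
    have l': "length ws' = Suc n" using l unfolding ws'_def by simp
    have nth': "\<And>i. i < Suc n \<Longrightarrow> ws' ! i = ws ! i" unfolding ws'_def by simp
    have wk: "walk G ws'"
      unfolding walk_def
    proof (intro conjI allI impI)
      show "ws' \<noteq> []" using l' by auto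
      show "set ws' \<subseteq> verts G" using w(1) unfolding walk_def ws'_def by (meson order_trans set_take_subset)
      fix i assume "Suc i < length ws'"
      hence "Suc i < length ws" "i < Suc n" "Suc i < Suc n" using l l' by auto
      thus "adj G (ws' ! i) (ws' ! Suc i)" using w(1) nth' unfolding walk_def by auto
    qed
    have "hd ws' = hd ws" using l unfolding ws'_def by (simp add: hd_conv_nth)
    moreover have "last ws' = ws ! n"
    proof -
      have "ws' \<noteq> []" using l' by auto
      hence "last ws' = ws' ! n" using l' by (simp add: last_conv_nth)
      thus ?thesis using nth'[of n] by simp
    qed
    ultimately have "ws ! n \<in> nbhd n G v" using wk w(2) l' unfolding nbhd_def by auto
    moreover have "adj G (ws ! n) (ws ! Suc n)" using w(1) l unfolding walk_def by auto
    moreover have "ws ! Suc n = u" using w(3) l by (metis last_conv_nth add_2_eq_Suc' diff_Suc_1 list.size(3) old.nat.distinct(1))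
    ultimately show ?thesis by auto
  qed
qed

lemma nbhd_adj:
  assumes g: "graph G" and p: "p \<in> nbhd n G v" and a: "adj G p u"
  shows "u \<in> nbhd (Suc n) G v"
proof -
  obtain ws where w: "walk G ws" "hd ws = v" "last ws = p" "length ws \<le> n + 1"
    using p unfolding nbhd_def by auto
  have ne: "ws \<noteq> []" using w unfolding walk_def by auto
  have uV: "u \<in> verts G" using adj_verts[OF g a] by simp
  have "walk G (ws @ [u])"
    unfolding walk_def
  proof (intro conjI allI impI)
    show "ws @ [u] \<noteq> []" by simp
    show "set (ws @ [u]) \<subseteq> verts G" using w(1) uV unfolding walk_def by auto
    fix i assume i: "Suc i < length (ws @ [u])"
    show "adj G ((ws @ [u]) ! i) ((ws @ [u]) ! Suc i)"
    proof (cases "Suc i < length ws")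
      case True thus ?thesis using w(1) unfolding walk_def by (simp add: nth_append)
    next
      case False
      hence "Suc i = length ws" using i by simp
      hence ii: "i = length ws - 1" by simp
      have "(ws @ [u]) ! i = p" using w(3) ne ii by (simp add: nth_append last_conv_nth)
      moreover have "(ws @ [u]) ! Suc i = u" using \<open>Suc i = length ws\<close> by (simp add: nth_append)
      ultimately have "(ws @ [u]) ! i = p" "(ws @ [u]) ! Suc i = u" by auto
      thus ?thesis using a by simp
    qed
  qed
  moreover have "hd (ws @ [u]) = v" using ne w(2) by simp
  ultimately show ?thesis using w(4) unfolding nbhd_def by (intro CollectI exI[of _ "ws @ [u]"]) auto
qed

lemma greedy:
  "(\<forall>i<k. finite (A i) \<and> k*m \<le> card (A i)) \<Longrightarrow>
   \<exists>L. (\<forall>i<k. \<forall>j<m. L i j \<in> A i) \<and>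
       (\<forall>i<k. \<forall>j<m. \<forall>i'<k. \<forall>j'<m. L i j = L i' j' \<longrightarrow> i = i' \<and> j = j')"
proof (induction k)
  case 0 show ?case by auto
next
  case (Suc k)
  have "\<forall>i<k. finite (A i) \<and> k*m \<le> card (A i)"
  proof (intro allI impI)
    fix i assume "i < k"
    hence "finite (A i) \<and> Suc k * m \<le> card (A i)" using Suc.prems by auto
    thus "finite (A i) \<and> k*m \<le> card (A i)" by auto
  qed
  then obtain L where L1: "\<forall>i<k. \<forall>j<m. L i j \<in> A i"
    and L2: "\<forall>i<k. \<forall>j<m. \<forall>i'<k. \<forall>j'<m. L i j = L i' j' \<longrightarrow> i = i' \<and> j = j'"
    using Suc.IH by blast
  define Used where "Used = (\<lambda>(i,j). L i j) ` ({..<k} \<times> {..<m})"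
  have fu: "finite Used" unfolding Used_def by simp
  have cu: "card Used \<le> k * m" unfolding Used_def
    using card_image_le[of "{..<k} \<times> {..<m}" "\<lambda>(i,j). L i j"] by (simp add: card_cartesian_product)
  have fa: "finite (A k)" "Suc k * m \<le> card (A k)" using Suc.prems by auto
  have "card (A k) - card Used \<le> card (A k - Used)" using fu by (rule diff_card_le_card_Diff)
  hence "m \<le> card (A k - Used)" using cu fa by simp
  then obtain B where B: "B \<subseteq> A k - Used" "card B = m" "finite B" by (rule obtain_subset_with_card_n)
  obtain g where gb: "bij_betw g {0..<m} B" using ex_bij_betw_nat_finite[OF B(3)] B(2) by auto
  define L' where "L' i j = (if i = k then g j else L i j)" for i j
  have g1: "j < m \<Longrightarrow> g j \<in> B" for j using gb unfolding bij_betw_def by auto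
  have g2: "j < m \<Longrightarrow> j' < m \<Longrightarrow> g j = g j' \<Longrightarrow> j = j'" for j j'
    using gb unfolding bij_betw_def inj_on_def by auto
  have g3: "j < m \<Longrightarrow> i < k \<Longrightarrow> j' < m \<Longrightarrow> g j \<noteq> L i j'" for i j j'
    using g1 B(1) unfolding Used_def by force
  show ?case
  proof (rule exI[of _ L'], rule conjI)
    show "\<forall>i<Suc k. \<forall>j<m. L' i j \<in> A i"
    proof (intro allI impI)
    fix i j assume "i < Suc k" "j < m"
    thus "L' i j \<in> A i" using L1 g1 B(1) unfolding L'_def by (cases "i = k") auto
    qed
  next
    show "\<forall>i<Suc k. \<forall>j<m. \<forall>i'<Suc k. \<forall>j'<m. L' i j = L' i' j' \<longrightarrow> i = i' \<and> j = j'"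
    proof (intro allI impI)
    fix i j i' j' assume a: "i < Suc k" "j < m" "i' < Suc k" "j' < m" "L' i j = L' i' j'"
    show "i = i' \<and> j = j'"
    proof -
      have c1: ?thesis if "i = k" "i' = k" using that a g2 unfolding L'_def by auto
      have c2: ?thesis if "i = k" "i' \<noteq> k" using that a g3[of j i' j'] unfolding L'_def by auto
      have c3: ?thesis if "i \<noteq> k" "i' = k" using that a g3[of j' i j] unfolding L'_def by auto
      have c4: ?thesis if "i \<noteq> k" "i' \<noteq> k"
      proof -
        have "i < k" "i' < k" "L i j = L i' j'" using that a unfolding L'_def by auto
        thus ?thesis using a L2 by blast
      qed
      show ?thesis using c1 c2 c3 c4 by blast
    qed
    qed
  qed
qed



locale bfs =
  fixes G :: "'a graph" and v :: 'a and r :: nat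
  assumes g: "graph G" and vV: "v \<in> verts G"
begin

definition "U = nbhd r G v"
definition "dst u = (LEAST n. u \<in> nbhd n G v)"
definition "par u = (if u = v then v else SOME p. p \<in> U \<and> {u,p} \<in> edges G \<and> Suc (dst p) = dst u)"
definition "desc w = {u \<in> U. dst w \<le> dst u \<and> (par ^^ (dst u - dst w)) u = w}"
definition "chl w = {c \<in> U. c \<noteq> v \<and> par c = w}"

lemma U_fin: "finite U" unfolding U_def using nbhd_finite[OF g] .
lemma U_verts: "U \<subseteq> verts G" unfolding U_def by (rule nbhd_verts)
lemma vU: "v \<in> U" unfolding U_def using nbhd_0[OF vV] nbhd_mono[of 0 r G v] by auto

lemma dst_in: "u \<in> U \<Longrightarrow> u \<in> nbhd (dst u) G v"
  unfolding U_def dst_def by (rule LeastI)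
lemma dst_le_of: "u \<in> nbhd n G v \<Longrightarrow> dst u \<le> n"
  unfolding dst_def by (rule Least_le)
lemma dst_le: "u \<in> U \<Longrightarrow> dst u \<le> r"
  unfolding U_def by (rule dst_le_of)
lemma dst_v: "dst v = 0" using dst_le_of[OF nbhd_0[OF vV]] by simp
lemma dst0: "u \<in> U \<Longrightarrow> dst u = 0 \<Longrightarrow> u = v"
  using dst_in nbhd0_only by fastforce

lemma parent_ex:
  assumes u: "u \<in> U" and nv: "u \<noteq> v"
  shows "\<exists>p. p \<in> U \<and> {u,p} \<in> edges G \<and> Suc (dst p) = dst u"
proof -
  obtain n where n: "dst u = Suc n" using dst0[OF u] nv by (cases "dst u") auto
  have un: "u \<in> nbhd (Suc n) G v" using dst_in[OF u] n by simp
  have nn: "u \<notin> nbhd n G v" using dst_le_of[of u n] n by auto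
  obtain p where p: "p \<in> nbhd n G v" "adj G p u" using nbhd_step[OF un] nn by auto
  have dp: "dst p \<le> n" using dst_le_of[OF p(1)] .
  have "dst p = n"
  proof (rule ccontr)
    assume "dst p \<noteq> n"
    hence "Suc (dst p) \<le> n" using dp by simp
    moreover have "p \<in> U" using p(1) nbhd_mono[of n r G v] dst_le[OF u] n unfolding U_def by auto
    hence "u \<in> nbhd (Suc (dst p)) G v" using nbhd_adj[OF g dst_in p(2)] by simp
    ultimately have "u \<in> nbhd n G v" using nbhd_mono[of "Suc (dst p)" n G v] by auto
    thus False using nn by simp
  qed
  moreover have "p \<in> U" using p(1) nbhd_mono[of n r G v] dst_le[OF u] n unfolding U_def by auto
  moreover have "{u,p} \<in> edges G" using p(2) unfolding adj_def by (simp add: insert_commute)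
  ultimately show ?thesis using n by auto
qed

lemma par_props:
  assumes u: "u \<in> U"
  shows "par u \<in> U \<and> dst (par u) = dst u - 1 \<and> (u \<noteq> v \<longrightarrow> {u, par u} \<in> edges G)"
proof (cases "u = v")
  case True thus ?thesis using vU dst_v unfolding par_def by simp
next
  case False
  have "par u \<in> U \<and> {u, par u} \<in> edges G \<and> Suc (dst (par u)) = dst u"
    unfolding par_def using False someI_ex[OF parent_ex[OF u False]] by simp
  thus ?thesis by auto
qed

lemma parn: "u \<in> U \<Longrightarrow> (par ^^ a) u \<in> U \<and> dst ((par ^^ a) u) = dst u - a"
proof (induction a)
  case 0 thus ?case by simp
next
  case (Suc a)
  thus ?case using par_props[of "(par ^^ a) u"] by simp
qed

lemma parn_v: "u \<in> U \<Longrightarrow> (par ^^ dst u) u = v"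
  using parn[of u "dst u"] dst0 by auto

lemma desc_U: "desc w \<subseteq> U" unfolding desc_def by auto
lemma desc_dst: "u \<in> desc w \<Longrightarrow> dst w \<le> dst u" unfolding desc_def by auto
lemma self_desc: "w \<in> U \<Longrightarrow> w \<in> desc w" unfolding desc_def by auto
lemma desc_v: "U = desc v"
  using parn_v dst_v unfolding desc_def by auto

lemma chl_dst: "c \<in> chl w \<Longrightarrow> dst c = Suc (dst w)"
proof -
  assume c: "c \<in> chl w"
  hence "c \<in> U" "c \<noteq> v" "par c = w" unfolding chl_def by auto
  moreover hence "dst c \<noteq> 0" using dst0 by auto
  ultimately show ?thesis using par_props[of c] by auto
qed

lemma chl_U: "chl w \<subseteq> U" unfolding chl_def by auto

lemma desc_anc:
  assumes s: "s \<in> desc c" and j: "j \<le> dst s - dst c"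
  shows "(par ^^ j) s \<in> desc c"
proof -
  have sU: "s \<in> U" and sd: "dst c \<le> dst s" "(par ^^ (dst s - dst c)) s = c"
    using s unfolding desc_def by auto
  define x where "x = (par ^^ j) s"
  have xU: "x \<in> U" and dx: "dst x = dst s - j" using parn[OF sU, of j] unfolding x_def by auto
  have e: "dst x - dst c + j = dst s - dst c" using dx j sd by simp
  have "(par ^^ (dst x - dst c)) x = (par ^^ (dst x - dst c + j)) s"
    unfolding x_def by (simp add: funpow_add)
  also have "\<dots> = c" using e sd by simp
  finally show ?thesis using xU dx j sd unfolding desc_def x_def by auto
qed

lemma desc_split:
  assumes w: "w \<in> U"
  shows "desc w \<subseteq> insert w (\<Union> (desc ` chl w))"
proof
  fix u assume u: "u \<in> desc w"
  have uU: "u \<in> U" and ud: "dst w \<le> dst u" "(par ^^ (dst u - dst w)) u = w"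
    using u unfolding desc_def by auto
  show "u \<in> insert w (\<Union> (desc ` chl w))"
  proof (cases "u = w")
    case True thus ?thesis by simp
  next
    case False
    hence lt: "dst w < dst u" using ud by (cases "dst u = dst w") auto
    define c where "c = (par ^^ (dst u - dst w - 1)) u"
    have cU: "c \<in> U" and dc: "dst c = Suc (dst w)" using parn[OF uU, of "dst u - dst w - 1"] lt
      unfolding c_def by auto
    have cv: "c \<noteq> v" using dc dst_v by auto
    have "dst u - dst w = Suc (dst u - dst w - 1)" using lt by simp
    hence "par c = w" using ud(2) unfolding c_def by (metis comp_apply funpow.simps(2))
    hence cc: "c \<in> chl w" using cU cv unfolding chl_def by auto
    have "u \<in> desc c" using uU dc lt unfolding desc_def c_def
      by (auto simp: Suc_diff_Suc)
    thus ?thesis using cc by blast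
  qed
qed

lemma desc_disj: "dst c1 = dst c2 \<Longrightarrow> c1 \<noteq> c2 \<Longrightarrow> desc c1 \<inter> desc c2 = {}"
  unfolding desc_def by auto

lemma counting:
  assumes H: "\<forall>w\<in>U. card {c \<in> chl w. desc c \<inter> S \<noteq> {}} \<le> M"
  shows "w \<in> U \<Longrightarrow> r \<le> dst w + h \<Longrightarrow> card (desc w \<inter> S) \<le> (M+1)^(h+1)"
proof (induction h arbitrary: w)
  case 0
  have "chl w = {}"
  proof (rule ccontr)
    assume "chl w \<noteq> {}"
    then obtain c where c: "c \<in> chl w" by auto
    hence "dst c = Suc (dst w)" "c \<in> U" using chl_dst chl_U by auto
    thus False using dst_le 0 by fastforce
  qed
  hence "desc w \<inter> S \<subseteq> {w}" using desc_split[OF 0(1)] by auto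
  hence "card (desc w \<inter> S) \<le> card {w}" by (intro card_mono) auto
  thus ?case by simp
next
  case (Suc h)
  define Gw where "Gw = {c \<in> chl w. desc c \<inter> S \<noteq> {}}"
  have fG: "finite Gw" using U_fin chl_U unfolding Gw_def by (metis (no_types, lifting) finite_subset mem_Collect_eq subsetI)
  have cG: "card Gw \<le> M" using H Suc.prems(1) unfolding Gw_def by blast
  have sub: "desc w \<inter> S \<subseteq> insert w (\<Union>c\<in>Gw. desc c \<inter> S)"
    using desc_split[OF Suc.prems(1)] unfolding Gw_def by blast
  have fin: "finite (\<Union>c\<in>Gw. desc c \<inter> S)" using fG U_fin desc_U by (meson finite_Int finite_UN_I finite_subset)
  have "card (desc w \<inter> S) \<le> card (insert w (\<Union>c\<in>Gw. desc c \<inter> S))"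
    using sub fin by (intro card_mono) auto
  also have "\<dots> \<le> Suc (card (\<Union>c\<in>Gw. desc c \<inter> S))" using fin by (simp add: card_insert_if)
  also have "card (\<Union>c\<in>Gw. desc c \<inter> S) \<le> (\<Sum>c\<in>Gw. card (desc c \<inter> S))" using fG by (rule card_UN_le)
  also have "\<dots> \<le> card Gw * (M+1)^(h+1)"
  proof -
    have b: "card (desc c \<inter> S) \<le> (M+1)^(h+1)" if c: "c \<in> Gw" for c
    proof -
      have "c \<in> U" "dst c = Suc (dst w)" using c chl_U chl_dst unfolding Gw_def by auto
      thus "card (desc c \<inter> S) \<le> (M+1)^(h+1)" using Suc.IH Suc.prems(2) by simp
    qed
    from sum_bounded_above[of Gw "\<lambda>c. card (desc c \<inter> S)", OF b] show ?thesis by simp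
  qed
  also have "\<dots> \<le> M * (M+1)^(h+1)" using cG by simp
  finally have "card (desc w \<inter> S) \<le> Suc (M * (M+1)^(h+1))" by simp
  moreover have "Suc (M * (M+1)^(h+1)) \<le> (M+1)^(Suc h + 1)"
  proof -
    have "1 \<le> (M+1)^(h+1)" by (simp add: Suc_le_eq)
    moreover have "(M+1)^(Suc h + 1) = (M+1)^(h+1) + M * (M+1)^(h+1)" by simp
    ultimately show ?thesis by linarith
  qed
  ultimately show ?case by linarith
qed

lemma many_children:
  assumes S: "S \<subseteq> U" and c: "(M+1)^(r+1) < card S"
  shows "\<exists>w\<in>U. M < card {c \<in> chl w. desc c \<inter> S \<noteq> {}}"
proof (rule ccontr)
  assume "\<not> ?thesis"
  hence "\<forall>w\<in>U. card {c \<in> chl w. desc c \<inter> S \<noteq> {}} \<le> M" by auto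
  from counting[OF this vU, of r] have "card (desc v \<inter> S) \<le> (M+1)^(r+1)" by simp
  moreover have "desc v \<inter> S = S" using S desc_v by auto
  ultimately show False using c by simp
qed

end



context bfs begin

lemma build:
  assumes w: "w \<in> U" and cG: "M \<le> card {c \<in> chl w. desc c \<inter> S \<noteq> {}}"
    and S: "S = {u \<in> U. M*(r+2) + M*M < degree G u}"
  shows "shallow_top_minor r (T 2 M) G"
proof -
  define Gw where "Gw = {c \<in> chl w. desc c \<inter> S \<noteq> {}}"
  have fG: "finite Gw" using U_fin chl_U unfolding Gw_def by (metis (no_types, lifting) finite_subset mem_Collect_eq subsetI)
  obtain B where B: "B \<subseteq> Gw" "card B = M" "finite B" using cG unfolding Gw_def[symmetric] by (rule obtain_subset_with_card_n)
  obtain cc where cb: "bij_betw cc {0..<M} B" using ex_bij_betw_nat_finite[OF B(3)] B(2) by auto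
  have cG': "cc i \<in> chl w \<and> desc (cc i) \<inter> S \<noteq> {}" if "i < M" for i
  proof -
    have "cc i \<in> B" using cb that unfolding bij_betw_def by auto
    thus ?thesis using B(1) unfolding Gw_def by auto
  qed
  have cinj: "i = j" if "i < M" "j < M" "cc i = cc j" for i j
    using cb that unfolding bij_betw_def inj_on_def by auto
  have cU: "cc i \<in> U" and dc: "dst (cc i) = Suc (dst w)" if "i < M" for i
    using cG'[OF that] chl_U chl_dst by auto
  have pc: "par (cc i) = w" if "i < M" for i using cG'[OF that] unfolding chl_def by auto
  define s where "s i = (SOME x. x \<in> desc (cc i) \<inter> S)" for i
  have sp: "s i \<in> desc (cc i) \<and> s i \<in> S" if "i < M" for i
    using someI_ex[of "\<lambda>x. x \<in> desc (cc i) \<inter> S"] cG'[OF that] unfolding s_def by auto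
  have sU: "s i \<in> U" if "i < M" for i using sp[OF that] desc_U by auto
  have ds: "Suc (dst w) \<le> dst (s i)" if "i < M" for i using desc_dst[of "s i" "cc i"] sp[OF that] dc[OF that] by auto
  have dsr: "dst (s i) \<le> r" if "i < M" for i using dst_le sU[OF that] by auto
  have sc: "(par ^^ (dst (s i) - Suc (dst w))) (s i) = cc i" if "i < M" for i
    using sp[OF that] dc[OF that] unfolding desc_def by auto
  have ddisj: "desc (cc i) \<inter> desc (cc j) = {}" if "i < M" "j < M" "i \<noteq> j" for i j
  proof -
    have "cc i \<noteq> cc j" using cinj that by blast
    moreover have "dst (cc i) = dst (cc j)" using dc that by simp
    ultimately show ?thesis using desc_disj by blast
  qed
  have wnd: "w \<notin> desc (cc i)" if "i < M" for i using desc_dst[of w "cc i"] dc[OF that] by auto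
  have sinj: "i = j" if "i < M" "j < M" "s i = s j" for i j
  proof (rule ccontr)
    assume "i \<noteq> j"
    hence "desc (cc i) \<inter> desc (cc j) = {}" using ddisj that(1,2) by blast
    moreover have "s i \<in> desc (cc i)" "s j \<in> desc (cc j)" using sp that(1,2) by auto
    ultimately show False using that(3) by auto
  qed
  have nsw: "s i \<noteq> w" if "i < M" for i using ds[OF that] by auto
  define len where "len i = Suc (dst (s i) - dst w)" for i
  define RP where "RP i = map (\<lambda>j. (par ^^ j) (s i)) [0..<len i]" for i
  have RPlen: "length (RP i) = len i" for i unfolding RP_def by simp
  have len2: "2 \<le> len i \<and> len i \<le> r + 1" if "i < M" for i
    using ds[OF that] dsr[OF that] unfolding len_def by auto
  have RPnth: "RP i ! j = (par ^^ j) (s i)" if "j < len i" for i j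
    using that unfolding RP_def by simp
  have RPhd: "hd (RP i) = s i" if "i < M" for i
  proof -
    have "RP i \<noteq> []" using len2[OF that] RPlen[of i] by auto
    thus ?thesis using RPnth[of 0 i] len2[OF that] by (simp add: hd_conv_nth)
  qed
  have parw: "(par ^^ (dst (s i) - dst w)) (s i) = w" if "i < M" for i
  proof -
    have "dst (s i) - dst w = Suc (dst (s i) - Suc (dst w))" using ds[OF that] by simp
    hence "(par ^^ (dst (s i) - dst w)) (s i) = par ((par ^^ (dst (s i) - Suc (dst w))) (s i))" by simp
    thus ?thesis using sc[OF that] pc[OF that] by simp
  qed
  have RPlast: "last (RP i) = w" if "i < M" for i
  proof -
    have "RP i \<noteq> []" using len2[OF that] RPlen[of i] by auto
    hence "last (RP i) = RP i ! (len i - 1)" using RPlen[of i] by (simp add: last_conv_nth)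
    also have "\<dots> = (par ^^ (dst (s i) - dst w)) (s i)" using RPnth[of "len i - 1" i] unfolding len_def by simp
    finally show ?thesis using parw[OF that] by simp
  qed
  have RPset: "set (RP i) \<subseteq> insert w (desc (cc i))" if i: "i < M" for i
  proof
    fix x assume "x \<in> set (RP i)"
    then obtain j where j: "j < len i" "x = (par ^^ j) (s i)" using RPnth RPlen by (metis in_set_conv_nth)
    show "x \<in> insert w (desc (cc i))"
    proof (cases "j = dst (s i) - dst w")
      case True thus ?thesis using parw[OF i] j by simp
    next
      case False
      hence "j \<le> dst (s i) - dst (cc i)" using j(1) dc[OF i] unfolding len_def by simp
      thus ?thesis using desc_anc[OF conjunct1[OF sp[OF i]]] j by simp
    qed
  qed
  have RPdist: "distinct (RP i)" if i: "i < M" for i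
    unfolding RP_def distinct_map
  proof
    show "distinct [0..<len i]" by simp
    show "inj_on (\<lambda>j. (par ^^ j) (s i)) (set [0..<len i])"
    proof (rule inj_onI)
      fix a b assume a: "a \<in> set [0..<len i]" and b: "b \<in> set [0..<len i]"
        and e: "(par ^^ a) (s i) = (par ^^ b) (s i)"
      have "dst ((par ^^ a) (s i)) = dst (s i) - a" "dst ((par ^^ b) (s i)) = dst (s i) - b"
        using parn[OF sU[OF i]] by auto
      moreover have "a \<le> dst (s i)" "b \<le> dst (s i)" using a b unfolding len_def by auto
      ultimately show "a = b" using e by simp
    qed
  qed
  have RPwalk: "walk G (RP i)" if i: "i < M" for i
    unfolding walk_def
  proof (intro conjI allI impI)
    show "RP i \<noteq> []" using len2[OF i] RPlen[of i] by auto
    show "set (RP i) \<subseteq> verts G" using U_verts parn[OF sU[OF i]] unfolding RP_def by auto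
    fix j assume j: "Suc j < length (RP i)"
    define x where "x = (par ^^ j) (s i)"
    have xU: "x \<in> U" and dx: "dst x = dst (s i) - j" using parn[OF sU[OF i]] unfolding x_def by auto
    have "j < dst (s i)" using j RPlen[of i] ds[OF i] unfolding len_def by simp
    hence "x \<noteq> v" using dx dst_v by auto
    hence "{x, par x} \<in> edges G" using par_props[OF xU] by auto
    moreover have "RP i ! j = x" "RP i ! Suc j = par x" using j RPlen[of i] RPnth unfolding x_def by auto
    ultimately show "adj G (RP i ! j) (RP i ! Suc j)" unfolding adj_def by simp
  qed
  have RPint: "internal (RP i) \<subseteq> desc (cc i) - {s i}" if i: "i < M" for i
  proof -
    have "internal (RP i) = set (RP i) - {s i, w}"
      using internal_distinct[OF RPdist[OF i]] len2[OF i] RPlen[of i] RPhd[OF i] RPlast[OF i] by simp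
    thus ?thesis using RPset[OF i] by auto
  qed
  define P0 where "P0 = (\<Union>i<M. set (RP i))"
  have fP0: "finite P0" unfolding P0_def by simp
  have cP0: "card P0 \<le> M * (r+2)"
  proof -
    have "card P0 \<le> (\<Sum>i<M. card (set (RP i)))" unfolding P0_def by (rule card_UN_le) simp
    also have "\<dots> \<le> (\<Sum>i<M. r + 2)"
    proof (rule sum_mono)
      fix i assume "i \<in> {..<M}"
      hence "length (RP i) \<le> r + 1" using len2 RPlen by auto
      thus "card (set (RP i)) \<le> r + 2" using card_length[of "RP i"] by linarith
    qed
    finally show ?thesis by simp
  qed
  have sP0: "s i \<in> P0" if "i < M" for i
  proof -
    have "RP i \<noteq> []" using len2[OF that] RPlen[of i] by auto
    thus ?thesis using RPhd[OF that] that unfolding P0_def by (metis UN_I hd_in_set lessThan_iff)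
  qed
  have wP0: "w \<in> P0" if "i < M" for i
  proof -
    have "RP i \<noteq> []" using len2[OF that] RPlen[of i] by auto
    thus ?thesis using RPlast[OF that] that unfolding P0_def by (metis UN_I last_in_set lessThan_iff)
  qed
  have intP0: "internal (RP i) \<subseteq> P0" if "i < M" for i
  proof -
    have "internal (RP i) \<subseteq> set (RP i)" unfolding internal_def by (cases "RP i") (auto dest: in_set_butlastD)
    thus ?thesis using that unfolding P0_def by auto
  qed
  define Nb where "Nb x = {y. {x,y} \<in> edges G}" for x
  have Nbv: "Nb x \<subseteq> verts G" for x using g unfolding Nb_def graph_def by auto
  have fNb: "finite (Nb x)" for x using Nbv g unfolding graph_def by (metis finite_subset)
  have degNb: "degree G x \<le> card (Nb x)" for x
  proof -
    have "{e \<in> edges G. x \<in> e} \<subseteq> (\<lambda>y. {x,y}) ` Nb x"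
    proof
      fix e assume e: "e \<in> {e \<in> edges G. x \<in> e}"
      hence "card e = 2" using g unfolding graph_def by auto
      then obtain a b where ab: "e = {a,b}" by (auto simp: card_2_iff)
      have "x = a \<or> x = b" using e ab by auto
      hence "e = {x,b} \<or> e = {x,a}" using ab by (auto simp: insert_commute)
      thus "e \<in> (\<lambda>y. {x,y}) ` Nb x" using e unfolding Nb_def by auto
    qed
    hence "degree G x \<le> card ((\<lambda>y. {x,y}) ` Nb x)" unfolding degree_def using fNb by (intro card_mono) auto
    also have "\<dots> \<le> card (Nb x)" by (rule card_image_le[OF fNb])
    finally show ?thesis .
  qed
  define A where "A i = Nb (s i) - P0" for i
  have Ap: "\<forall>i<M. finite (A i) \<and> M*M \<le> card (A i)"
  proof (intro allI impI conjI)
    fix i assume i: "i < M"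
    show "finite (A i)" unfolding A_def using fNb by simp
    have "M*(r+2) + M*M < degree G (s i)" using sp[OF i] S by simp
    hence "M*(r+2) + M*M < card (Nb (s i))" using degNb[of "s i"] by simp
    moreover have "card (Nb (s i)) - card P0 \<le> card (A i)" unfolding A_def using fP0 by (rule diff_card_le_card_Diff)
    ultimately show "M*M \<le> card (A i)" using cP0 by linarith
  qed
  obtain L where L1: "\<forall>i<M. \<forall>j<M. L i j \<in> A i"
    and L2: "\<forall>i<M. \<forall>j<M. \<forall>i'<M. \<forall>j'<M. L i j = L i' j' \<longrightarrow> i = i' \<and> j = j'"
    using greedy[OF Ap] by blast
  have LN: "L i j \<in> Nb (s i)" and LP: "L i j \<notin> P0" if "i < M" "j < M" for i j
    using L1 that unfolding A_def by auto
  have nLw: "L i j \<noteq> w" if "i < M" "j < M" for i j using LP[OF that] wP0[OF that(1)] by auto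
  have nLs: "L i j \<noteq> s i'" if "i < M" "j < M" "i' < M" for i j i' using LP[OF that(1,2)] sP0[OF that(3)] by auto
  have Linj: "i = i' \<and> j = j'" if "i < M" "j < M" "i' < M" "j' < M" "L i j = L i' j'" for i j i' j'
    using L2 that by blast
  define fT where "fT xs = (case xs of [] \<Rightarrow> w | [i] \<Rightarrow> s i | i # j # _ \<Rightarrow> L i j)" for xs
  have fT0: "fT [] = w" and fT1: "fT [i] = s i" and fT2: "fT [i,j] = L i j" for i j
    unfolding fT_def by simp_all
  define PT where "PT e = (if \<exists>i. e = {[],[i]} then RP (THE i. e = {[],[i]})
      else [s (THE i. \<exists>j. e = {[i],[i,j]}), L (THE i. \<exists>j. e = {[i],[i,j]}) (THE j. \<exists>i. e = {[i],[i,j]})])"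
    for e :: "nat list set"
  have PT1: "PT {[],[i]} = RP i" for i
  proof -
    have "(THE i'. {[],[i]} = {[],[i']}) = i" by (rule the_equality) (auto simp: doubleton_eq_iff)
    thus ?thesis unfolding PT_def by auto
  qed
  have PT2: "PT {[i],[i,j]} = [s i, L i j]" for i j
  proof -
    have n: "\<not> (\<exists>i'. {[i],[i,j]} = {[],[i']})" by (auto simp: doubleton_eq_iff)
    have t1: "(THE i'. \<exists>j'. {[i],[i,j]} = {[i'],[i',j']}) = i" by (rule the_equality) (auto simp: doubleton_eq_iff)
    have t2: "(THE j'. \<exists>i'. {[i],[i,j]} = {[i'],[i',j']}) = j" by (rule the_equality) (auto simp: doubleton_eq_iff)
    show ?thesis unfolding PT_def using n t1 t2 by simp
  qed
  have fTcases: "(y = [] \<and> fT y = w) \<or> (\<exists>i<M. y = [i] \<and> fT y = s i) \<or> (\<exists>i<M. \<exists>j<M. y = [i,j] \<and> fT y = L i j)"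
    if "y \<in> verts (T 2 M)" for y
    using that unfolding T2_verts by (auto simp: fT0 fT1 fT2)
  have h1: "inj_on fT (verts (T 2 M))"
  proof (rule inj_onI)
    fix x y assume x: "x \<in> verts (T 2 M)" and y: "y \<in> verts (T 2 M)" and e: "fT x = fT y"
    from fTcases[OF x] fTcases[OF y] show "x = y"
    proof (elim disjE exE conjE)
      show "x = y" if "x = []" "y = []" using that by simp
    next
      fix i assume "x = []" "fT x = w" "i < M" "y = [i]" "fT y = s i" thus "x = y" using e nsw by auto
    next
      fix i j assume "x = []" "fT x = w" "i < M" "j < M" "y = [i,j]" "fT y = L i j" thus "x = y" using e nLw by auto
    next
      fix i assume "y = []" "fT y = w" "i < M" "x = [i]" "fT x = s i" thus "x = y" using e nsw by auto
    next
      fix i i' assume "i < M" "x = [i]" "fT x = s i" "i' < M" "y = [i']" "fT y = s i'" thus "x = y" using e sinj by auto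
    next
      fix i i' j assume "i < M" "x = [i]" "fT x = s i" "i' < M" "j < M" "y = [i',j]" "fT y = L i' j"
      thus "x = y" using e nLs[of i' j i] by auto
    next
      fix i j assume "y = []" "fT y = w" "i < M" "j < M" "x = [i,j]" "fT x = L i j" thus "x = y" using e nLw by auto
    next
      fix i i' j assume "i < M" "y = [i]" "fT y = s i" "i' < M" "j < M" "x = [i',j]" "fT x = L i' j"
      thus "x = y" using e nLs[of i' j i] by auto
    next
      fix i j i' j' assume "i < M" "j < M" "x = [i,j]" "fT x = L i j" "i' < M" "j' < M" "y = [i',j']" "fT y = L i' j'"
      thus "x = y" using e Linj[of i j i' j'] by auto
    qed
  qed
  have h2: "fT ` verts (T 2 M) \<subseteq> verts G"
  proof
    fix x assume "x \<in> fT ` verts (T 2 M)"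
    then obtain y where y: "y \<in> verts (T 2 M)" "x = fT y" by auto
    from fTcases[OF y(1)] show "x \<in> verts G"
    proof (elim disjE exE conjE)
      assume "y = []" "fT y = w" hence "x = w" using y(2) by simp
      thus ?thesis using w U_verts by (simp add: subset_iff)
    next
      fix i assume i: "i < M" "y = [i]" "fT y = s i"
      hence "x = s i" using y(2) by simp
      moreover have "s i \<in> U" using sU[OF i(1)] .
      ultimately show ?thesis using U_verts by (simp add: subset_iff)
    next
      fix i j assume i: "i < M" "j < M" "y = [i,j]" "fT y = L i j"
      hence "x = L i j" using y(2) by simp
      moreover have "L i j \<in> Nb (s i)" using LN[OF i(1,2)] .
      ultimately show ?thesis using Nbv[of "s i"] by (simp add: subset_iff)
    qed
  qed
  have Ecases: "(\<exists>i<M. e = {[],[i]}) \<or> (\<exists>i<M. \<exists>j<M. e = {[i],[i,j]})" if "e \<in> edges (T 2 M)" for e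
    using that T2_edges by blast
  have intleaf: "internal [a, b] = {}" for a b :: 'a unfolding internal_def by simp
  have h3: "\<forall>e\<in>edges (T 2 M). gpath G (PT e) \<and> length (PT e) \<ge> 2 \<and> length (PT e) \<le> r + 2 \<and>
                      {hd (PT e), last (PT e)} = fT ` e \<and>
                      internal (PT e) \<inter> fT ` verts (T 2 M) = {}"
  proof
    fix e assume e: "e \<in> edges (T 2 M)"
    from Ecases[OF e] show "gpath G (PT e) \<and> length (PT e) \<ge> 2 \<and> length (PT e) \<le> r + 2 \<and>
                      {hd (PT e), last (PT e)} = fT ` e \<and>
                      internal (PT e) \<inter> fT ` verts (T 2 M) = {}"
    proof (elim disjE exE conjE)
      fix i assume i: "i < M" and ei: "e = {[],[i]}"
      have pe: "PT e = RP i" using ei PT1 by simp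
      have a1: "gpath G (RP i)" unfolding gpath_def using RPwalk[OF i] RPdist[OF i] by simp
      have a2: "2 \<le> length (RP i)" "length (RP i) \<le> r + 2" using len2[OF i] RPlen[of i] by auto
      have a3: "{hd (RP i), last (RP i)} = fT ` e" using ei RPhd[OF i] RPlast[OF i] fT0 fT1
        by (auto simp: insert_commute)
      have a4: "internal (RP i) \<inter> fT ` verts (T 2 M) = {}"
      proof (rule ccontr)
        assume "internal (RP i) \<inter> fT ` verts (T 2 M) \<noteq> {}"
        then obtain x y where x: "x \<in> internal (RP i)" and y: "y \<in> verts (T 2 M)" "x = fT y" by auto
        have xd: "x \<in> desc (cc i)" "x \<noteq> s i" using x RPint[OF i] by auto
        have xP: "x \<in> P0" using x intP0[OF i] by auto
        from fTcases[OF y(1)] show False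
        proof (elim disjE exE conjE)
          assume "y = []" "fT y = w" thus False using y(2) xd wnd[OF i] by simp
        next
          fix j assume j: "j < M" "y = [j]" "fT y = s j"
          show False
          proof (cases "j = i")
            case True thus False using j y(2) xd by simp
          next
            case False
            hence "desc (cc i) \<inter> desc (cc j) = {}" using ddisj i j(1) by auto
            moreover have "s j \<in> desc (cc j)" using sp j(1) by auto
            ultimately show False using j y(2) xd by auto
          qed
        next
          fix j l assume "j < M" "l < M" "y = [j,l]" "fT y = L j l"
          thus False using y(2) xP LP by auto
        qed
      qed
      show ?thesis using pe a1 a2 a3 a4 by simp
    next
      fix i j assume i: "i < M" and j: "j < M" and ei: "e = {[i],[i,j]}"
      have pe: "PT e = [s i, L i j]" using ei PT2 by simp
      have ne: "s i \<noteq> L i j" using nLs[OF i j i] by auto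
      have wk: "walk G [s i, L i j]" unfolding walk_def
      proof (intro conjI allI impI)
        show "[s i, L i j] \<noteq> []" by simp
        show "set [s i, L i j] \<subseteq> verts G" using sU[OF i] U_verts LN[OF i j] Nbv by auto
        fix k assume "Suc k < length [s i, L i j]"
        hence "k = 0" by simp
        thus "adj G ([s i, L i j] ! k) ([s i, L i j] ! Suc k)" using LN[OF i j] unfolding Nb_def adj_def by simp
      qed
      have "gpath G [s i, L i j]" unfolding gpath_def using wk ne by simp
      moreover have "{hd [s i, L i j], last [s i, L i j]} = fT ` e" using ei fT1 fT2 by simp
      ultimately show ?thesis using pe intleaf by simp
    qed
  qed
  have Iint: "(\<exists>i<M. e = {[],[i]} \<and> internal (PT e) \<subseteq> desc (cc i)) \<or> internal (PT e) = {}"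
    if "e \<in> edges (T 2 M)" for e
    using Ecases[OF that]
  proof (elim disjE exE conjE)
    fix i assume i: "i < M" and ei: "e = {[],[i]}"
    thus ?thesis using PT1 RPint[OF i] by auto
  next
    fix i j assume "i < M" "j < M" "e = {[i],[i,j]}"
    thus ?thesis using PT2 intleaf by simp
  qed
  have h4: "\<forall>e\<in>edges (T 2 M). \<forall>e'\<in>edges (T 2 M). e \<noteq> e' \<longrightarrow> internal (PT e) \<inter> internal (PT e') = {}"
  proof (intro ballI impI)
    fix e e' assume e: "e \<in> edges (T 2 M)" and e': "e' \<in> edges (T 2 M)" and ne: "e \<noteq> e'"
    from Iint[OF e] Iint[OF e'] show "internal (PT e) \<inter> internal (PT e') = {}"
    proof (elim disjE exE conjE)
      fix i i' assume i: "i < M" "e = {[],[i]}" "internal (PT e) \<subseteq> desc (cc i)"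
        and i': "i' < M" "e' = {[],[i']}" "internal (PT e') \<subseteq> desc (cc i')"
      have "i \<noteq> i'" using i i' ne by auto
      hence "desc (cc i) \<inter> desc (cc i') = {}" using ddisj i(1) i'(1) by auto
      thus ?thesis using i(3) i'(3) by auto
    qed auto
  qed
  show ?thesis unfolding shallow_top_minor_def
    by (rule exI[of _ fT], rule exI[of _ PT], rule conjI[OF h1 conjI[OF h2 conjI[OF h3 h4]]])
qed

end



theorem lemma5p2:
  fixes C :: "'a graph set"
  assumes "\<forall>G\<in>C. graph G"
  shows "tree_rank_le 2 C \<longleftrightarrow> locally_almost_bounded_degree C"
proof
  assume tr: "tree_rank_le 2 C"
  have "\<forall>r. \<exists>m. \<forall>G\<in>C. \<not> shallow_top_minor r (T 2 m) G" using tr unfolding tree_rank_le_def by simp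
  then obtain Mf where Mf: "\<forall>r. \<forall>G\<in>C. \<not> shallow_top_minor r (T 2 (Mf r)) G" by (metis choice)
  show "locally_almost_bounded_degree C" unfolding locally_almost_bounded_degree_def
  proof (rule exI[of _ "\<lambda>r. (Mf r + 1)^(r+1)"], rule exI[of _ "\<lambda>r. Mf r*(r+2) + Mf r*Mf r"], intro allI ballI)
    fix r G v assume G: "G \<in> C" and v: "v \<in> verts G"
    interpret bfs G v r using assms G v by unfold_locales auto
    define S where "S = {u \<in> U. Mf r*(r+2) + Mf r*Mf r < degree G u}"
    show "card {u \<in> nbhd r G v. degree G u > Mf r*(r+2) + Mf r*Mf r} \<le> (Mf r+1)^(r+1)"
    proof (rule ccontr)
      assume "\<not> card {u \<in> nbhd r G v. degree G u > Mf r*(r+2) + Mf r*Mf r} \<le> (Mf r+1)^(r+1)"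
      hence c: "(Mf r+1)^(r+1) < card S" unfolding S_def U_def by simp
      have "S \<subseteq> U" unfolding S_def by auto
      from many_children[OF this c] obtain w where w: "w \<in> U"
        and cw: "Mf r < card {c \<in> chl w. desc c \<inter> S \<noteq> {}}" by blast
      have "shallow_top_minor r (T 2 (Mf r)) G" using build[OF w _ S_def] cw by simp
      thus False using Mf G by blast
    qed
  qed
next
  assume "locally_almost_bounded_degree C"
  thus "tree_rank_le 2 C" using labd_imp_tr assms by blast
qed

end
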